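(* For plane binary tree shapes $t$ let $S_t$, $T$ be as in the context. Then \[ \sum_{\substack{t \in \mathcal{B}_{\le n}\\ |t| \ge \log_4 n}} \left(1 - \frac{[z^n]S_t(z)}{[z^n]T(z)}\right) = \Omega\!\left(\sqrt{n}\right) \quad \text{as } n\to\infty . \]
   Context: A plane binary tree is a rooted tree in which each node has a left and a right slot, each empty or holding a subtree; $\mathcal{B}_{\le n}$ is the set of (unlabeled) plane binary trees with at most $n$ nodes, and $|t|$ is the number of nodes. A plane increasing binary tree of size $n$ is a plane binary tree whose $n$ nodes are labeled $1,\dots,n$ increasingly along every path from the root; their exponential generating function is $T(z)=z/(1-z)$, so $[z^n]T(z)=1$. A fringe subtree is a node with all its descendants; its shape is obtained by forgetting labels. For a shape $t$ with $k$ nodes, $\ell(t)$ is its number of increasing labelings (equal to $k!$ divided by the product of the sizes of all fringe subtrees of $t$) and $w(t)=\ell(t)/k!$. $S_t(z)$ is the exponential generating function of plane increasing binary trees having no fringe subtree of shape $t$; it is the power series solution of $S_t'(z)=(1+S_t(z))^2-w(t)kz^{k-1}$, $S_t(0)=0$. *)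

theory Defs
  imports Complex_Main "HOL-Computational_Algebra.Formal_Power_Series" "HOL-Library.Landau_Symbols"
begin

datatype btree = E | N btree btree

fun bsize :: "btree \<Rightarrow> nat" where
  "bsize E = 0"
| "bsize (N l r) = Suc (bsize l + bsize r)"

fun hook :: "btree \<Rightarrow> nat" where
  "hook E = 1"
| "hook (N l r) = bsize (N l r) * hook l * hook r"

text \<open>Number of increasing labelings and the weight w(t) = l(t)/|t|!.\<close>
definition nlab :: "btree \<Rightarrow> real" where
  "nlab t = fact (bsize t) / real (hook t)"

definition wt :: "btree \<Rightarrow> real" where
  "wt t = nlab t / fact (bsize t)"

text \<open>EGF of plane increasing binary trees.\<close>
definition Tgf :: "real fps" where
  "Tgf = fps_X / (1 - fps_X)"

text \<open>EGF of plane increasing binary trees avoiding fringe subtree shape t: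
  the power series solution of S' = (1+S)^2 - w(t) k z^(k-1), S(0)=0, with k = |t|.\<close>
definition Sgf :: "btree \<Rightarrow> real fps" where
  "Sgf t = (THE S. fps_deriv S = (1 + S)^2 - fps_const (wt t * real (bsize t)) * fps_X ^ (bsize t - 1)
                 \<and> fps_nth S 0 = 0)"

end

theory Submission
  imports Defs "HOL-Real_Asymp.Real_Asymp"
begin

function uu :: "real \<Rightarrow> nat \<Rightarrow> nat \<Rightarrow> real" where
 "uu c k n = (if n = 0 then 1 else ((\<Sum>i<n. uu c k i * uu c k (n - 1 - i)) - (if n = k then c else 0)) / real n)"
  by pat_completeness auto
termination by (relation "measure (\<lambda>(c,k,n). n)") auto

declare uu.simps[simp del]

lemma Tgf_nth: "fps_nth Tgf n = (if n = 0 then 0 else 1)"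
proof -
  have "Tgf = fps_X * inverse (1 - fps_X)"
    unfolding Tgf_def by (simp add: fps_divide_unit)
  also have "inverse (1 - fps_X) = Abs_fps (\<lambda>n. 1::real)"
    by (metis fps_inverse_gp' fps_inverse_idempotent fps_inverse_zero one_neq_zero fps_nth_Abs_fps
        fps_inverse_eq_0_iff)
  finally have T: "Tgf = fps_X * Abs_fps (\<lambda>n. 1::real)" .
  show ?thesis unfolding T by (simp add: fps_X_mult_nth)
qed

definition Sc :: "real \<Rightarrow> nat \<Rightarrow> real fps" where
  "Sc c k = Abs_fps (\<lambda>n. if n = 0 then 0 else uu c k n)"

lemma one_plus_Sc: "1 + Sc c k = Abs_fps (uu c k)"
  by (rule fps_ext) (auto simp: Sc_def uu.simps)

lemma sq_nth: "fps_nth ((1 + Sc c k)^2) n = (\<Sum>i<Suc n. uu c k i * uu c k (Suc n - 1 - i))"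
  unfolding one_plus_Sc power2_eq_square fps_mult_nth
  by (simp add: atLeast0AtMost lessThan_Suc_atMost)

lemma Sc_ode:
  assumes "k = 0 \<Longrightarrow> c = 0"
  shows "fps_deriv (Sc c k) = (1 + Sc c k)^2 - fps_const c * fps_X ^ (k - 1)"
proof (rule fps_ext)
  fix n
  have "fps_nth (fps_deriv (Sc c k)) n = real (Suc n) * uu c k (Suc n)"
    by (simp add: Sc_def)
  also have "\<dots> = (\<Sum>i<Suc n. uu c k i * uu c k (Suc n - 1 - i)) - (if Suc n = k then c else 0)"
    by (subst uu.simps) simp
  also have "\<dots> = fps_nth ((1 + Sc c k)^2 - fps_const c * fps_X ^ (k - 1)) n"
    using assms by (auto simp: sq_nth)
  finally show "fps_nth (fps_deriv (Sc c k)) n = fps_nth ((1 + Sc c k)^2 - fps_const c * fps_X ^ (k - 1)) n" .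
qed

lemma Sc_unique:
  assumes "fps_deriv F = (1 + F)^2 - fps_const c * fps_X ^ (k - 1)" "fps_nth F 0 = 0"
    and "k = 0 \<Longrightarrow> c = 0"
  shows "F = Sc c k"
proof (rule fps_ext)
  fix n show "fps_nth F n = fps_nth (Sc c k) n"
  proof (induction n rule: less_induct)
    case (less n)
    show ?case
    proof (cases n)
      case 0 then show ?thesis using assms by (simp add: Sc_def)
    next
      case (Suc m)
      have eq: "fps_nth ((1 + F)^2) m = fps_nth ((1 + Sc c k)^2) m"
        unfolding power2_eq_square fps_mult_nth
        by (intro sum.cong refl) (simp add: less Suc)
      have "real (Suc m) * fps_nth F (Suc m) = fps_nth ((1 + F)^2 - fps_const c * fps_X ^ (k - 1)) m"
        using arg_cong[OF assms(1), of "\<lambda>G. fps_nth G m"] by simp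
      also have "\<dots> = fps_nth ((1 + Sc c k)^2 - fps_const c * fps_X ^ (k - 1)) m" using eq by simp
      also have "\<dots> = real (Suc m) * fps_nth (Sc c k) (Suc m)"
        using Sc_ode[OF assms(3)] arg_cong[of _ _ "\<lambda>G. fps_nth G m"] by (metis fps_deriv_nth Suc_eq_plus1 of_nat_Suc)
      finally show ?thesis using Suc by simp
    qed
  qed
qed

lemma Sc_0: "fps_nth (Sc c k) 0 = 0" by (simp add: Sc_def)

lemma Sgf_eq: "Sgf t = Sc (wt t * real (bsize t)) (bsize t)"
  unfolding Sgf_def
proof (rule the_equality)
  have h: "bsize t = 0 \<Longrightarrow> wt t * real (bsize t) = 0" by simp
  show "fps_deriv (Sc (wt t * real (bsize t)) (bsize t)) = (1 + Sc (wt t * real (bsize t)) (bsize t))\<^sup>2 -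
          fps_const (wt t * real (bsize t)) * fps_X ^ (bsize t - 1) \<and> fps_nth (Sc (wt t * real (bsize t)) (bsize t)) 0 = 0"
    using Sc_ode[OF h] Sc_0 by blast
  show "\<And>S. fps_deriv S = (1 + S)\<^sup>2 - fps_const (wt t * real (bsize t)) * fps_X ^ (bsize t - 1) \<and> fps_nth S 0 = 0 \<Longrightarrow>
         S = Sc (wt t * real (bsize t)) (bsize t)"
    using Sc_unique[OF _ _ h] by blast
qed

lemma Sgf_nth: "n \<ge> 1 \<Longrightarrow> fps_nth (Sgf t) n = uu (wt t * real (bsize t)) (bsize t) n"
  by (simp add: Sgf_eq Sc_def)


lemma uu_rec: "n \<ge> 1 \<Longrightarrow> real n * uu c k n = (\<Sum>i<n. uu c k i * uu c k (n - 1 - i)) - (if n = k then c else 0)"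
  by (subst uu.simps) simp

lemma uu_one: "n < k \<Longrightarrow> uu c k n = 1"
proof (induction n rule: less_induct)
  case (less n)
  show ?case
  proof (cases "n = 0")
    case True then show ?thesis by (simp add: uu.simps)
  next
    case False
    have "(\<Sum>i<n. uu c k i * uu c k (n - 1 - i)) = (\<Sum>i<n. 1)"
      using False less.prems by (intro sum.cong refl) (simp add: less.IH)
    then have "real n * uu c k n = real n" using uu_rec[of n c k] False less.prems by simp
    then show ?thesis using False by simp
  qed
qed

lemma uu_bounds:
  assumes "0 \<le> c" "c \<le> real k"
  shows "0 \<le> uu c k n \<and> uu c k n \<le> 1"
proof (induction n rule: less_induct)
  case (less n)
  show ?case
  proof (cases "n = 0")
    case True then show ?thesis by (simp add: uu.simps)
  next
    case False
    let ?s = "\<Sum>i<n. uu c k i * uu c k (n - 1 - i)"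
    have s0: "0 \<le> ?s" by (intro sum_nonneg) (simp add: less)
    have "?s \<le> (\<Sum>i<n. 1)" by (intro sum_mono mult_le_one) (simp_all add: less)
    then have s1: "?s \<le> real n" by simp
    have rec: "real n * uu c k n = ?s - (if n = k then c else 0)" using uu_rec[of n c k] False by simp
    show ?thesis
    proof (cases "n = k")
      case True
      have "?s = (\<Sum>i<n. 1)" by (intro sum.cong refl) (simp add: uu_one True)
      then have "real n * uu c k n = real n - c" using rec True by simp
      moreover have "real n > 0" using False by simp
      ultimately have "0 \<le> real n * uu c k n" "real n * uu c k n \<le> real n * 1" using assms True by simp_all
      then show ?thesis using \<open>real n > 0\<close> by (simp add: zero_le_mult_iff mult_le_cancel_left_pos)
    next
      case f: False
      then have "real n * uu c k n = ?s" using rec by simp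
      moreover have "real n > 0" using False by simp
      ultimately have "0 \<le> real n * uu c k n" "real n * uu c k n \<le> real n * 1" using s0 s1 by simp_all
      then show ?thesis using \<open>real n > 0\<close> by (simp add: zero_le_mult_iff mult_le_cancel_left_pos)
    qed
  qed
qed

lemma uu_k: "k \<ge> 1 \<Longrightarrow> uu c k k = 1 - c / real k"
proof -
  assume k: "k \<ge> 1"
  have "(\<Sum>i<k. uu c k i * uu c k (k - 1 - i)) = (\<Sum>i<k. 1)"
    by (intro sum.cong refl) (simp add: uu_one)
  then have "real k * uu c k k = real k - c" using uu_rec[of k c k] k by simp
  then show ?thesis using k by (simp add: field_simps)
qed

definition dd :: "real \<Rightarrow> nat \<Rightarrow> nat \<Rightarrow> real" where "dd c k n = 1 - uu c k n"

lemma prod_expand: "(1 - a) * (1 - b) = 1 - a - b + a * (b::real)"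
  by (simp add: algebra_simps)

lemma dd_rec:
  assumes "n \<ge> 1"
  shows "real n * dd c k n = 2 * (\<Sum>i<n. dd c k i) - (\<Sum>i<n. dd c k i * dd c k (n - 1 - i)) + (if n = k then c else 0)"
proof -
  have rfl: "(\<Sum>i<n. dd c k (n - 1 - i)) = (\<Sum>i<n. dd c k i)"
  proof -
    have "(\<Sum>i<n. dd c k (n - 1 - i)) = (\<Sum>i<n. dd c k (n - Suc i))"
      by (intro sum.cong refl) (simp only: diff_diff_left plus_1_eq_Suc)
    then show ?thesis using sum.nat_diff_reindex[of "dd c k" n] by (simp only:)
  qed
  have "(\<Sum>i<n. uu c k i * uu c k (n - 1 - i)) = (\<Sum>i<n. (1 - dd c k i) * (1 - dd c k (n - 1 - i)))"
    by (simp add: dd_def)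
  also have "\<dots> = (\<Sum>i<n. 1 - dd c k i - dd c k (n - 1 - i) + dd c k i * dd c k (n - 1 - i))"
    by (rule sum.cong[OF refl], rule prod_expand)
  also have "\<dots> = real n - (\<Sum>i<n. dd c k i) - (\<Sum>i<n. dd c k (n - 1 - i)) + (\<Sum>i<n. dd c k i * dd c k (n - 1 - i))"
    by (simp add: sum.distrib sum_subtractf)
  finally have "(\<Sum>i<n. uu c k i * uu c k (n - 1 - i)) = real n - 2 * (\<Sum>i<n. dd c k i) + (\<Sum>i<n. dd c k i * dd c k (n - 1 - i))"
    using rfl by simp
  then show ?thesis using uu_rec[OF assms, of c k] by (simp add: dd_def algebra_simps)
qed

lemma sum_lin: "(\<Sum>i<m. real i + 1) = real m * (real m + 1) / 2"
  by (induction m) (simp_all add: field_simps)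

lemma sum_sq: "(\<Sum>i<m. (real i + 1)^2) = real m * (real m + 1) * (2 * real m + 1) / 6"
  by (induction m) (simp_all add: field_simps power2_eq_square)

lemma sum_conv: "(\<Sum>i<m. (real i + 1) * (real m - real i)) = real m * (real m + 1) * (real m + 2) / 6"
proof -
  have "(\<Sum>i<m. (real i + 1) * (real m - real i)) = (\<Sum>i<m. real m * (real i + 1) - ((real i + 1)^2 - (real i + 1)))"
    by (intro sum.cong refl) (simp add: algebra_simps power2_eq_square)
  also have "\<dots> = real m * (\<Sum>i<m. real i + 1) - (\<Sum>i<m. (real i + 1)^2) + (\<Sum>i<m. real i + 1)"
    by (simp add: sum_subtractf sum_distrib_left)
  also have "\<dots> = real m * (real m * (real m + 1) / 2) - real m * (real m + 1) * (2 * real m + 1) / 6 + real m * (real m + 1) / 2"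
    by (simp only: sum_lin sum_sq)
  also have "\<dots> = real m * (real m + 1) * (real m + 2) / 6"
    by (simp add: field_simps)
  finally show ?thesis .
qed


lemma dd_0: "dd c k 0 = 0" by (simp add: dd_def uu.simps)
lemma dd_zero: "n < k \<Longrightarrow> dd c k n = 0" by (simp add: dd_def uu_one)
lemma dd_kk: "k \<ge> 1 \<Longrightarrow> dd c k k = c / real k" by (simp add: dd_def uu_k)
lemma dd_bounds: "0 \<le> c \<Longrightarrow> c \<le> real k \<Longrightarrow> 0 \<le> dd c k n \<and> dd c k n \<le> 1"
  using uu_bounds[of c k n] by (simp add: dd_def)

lemma dd_upper:
  assumes k: "k \<ge> 1" and c: "c = w * real k" and w: "0 \<le> w" "w \<le> 1"
  shows "dd c k n \<le> w / (real k + 1) * (real n + 1)"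
proof (induction n rule: less_induct)
  case (less n)
  define \<beta> where "\<beta> = w / (real k + 1)"
  have b0: "\<beta> \<ge> 0" using w by (simp add: \<beta>_def)
  have cb: "0 \<le> c" "c \<le> real k" using c w k by (auto simp: mult_le_cancel_right1)
  show ?case
  proof (cases "n = 0")
    case True then show ?thesis using b0 by (simp add: dd_0 \<beta>_def[symmetric])
  next
    case False
    show ?thesis
    proof (cases "n = k")
      case True
      then show ?thesis using k c by (simp add: dd_kk)
    next
      case nk: False
      have pp: "0 \<le> (\<Sum>i<n. dd c k i * dd c k (n - 1 - i))"
        using dd_bounds[OF cb] by (intro sum_nonneg) simp
      have "(\<Sum>i<n. dd c k i) \<le> (\<Sum>i<n. \<beta> * (real i + 1))"
      proof (intro sum_mono)
        fix i assume "i \<in> {..<n}"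
        then show "dd c k i \<le> \<beta> * (real i + 1)" using less.IH[of i] by (simp add: \<beta>_def)
      qed
      also have "\<dots> = \<beta> * (real n * (real n + 1) / 2)" by (simp add: sum_distrib_left[symmetric] sum_lin)
      finally have "real n * dd c k n \<le> real n * (\<beta> * (real n + 1))"
        using dd_rec[of n c k] False nk pp by (simp add: algebra_simps)
      then have "dd c k n \<le> \<beta> * (real n + 1)" using False by (simp add: mult_le_cancel_left_pos)
      then show ?thesis by (simp add: \<beta>_def)
    qed
  qed
qed

lemma sum_ell:
  fixes a \<gamma> w :: real and k m :: nat
  defines "LL \<equiv> (\<lambda>i. if i < k then 0 else if i = k then w else a * (real i + 1) - \<gamma> * (real i + 1)^2)"
  assumes m: "m \<ge> Suc k" and g: "\<gamma> \<ge> 0"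
  shows "(\<Sum>i<m. LL i) \<ge> w + a * (real m * (real m + 1) - (real k + 1) * (real k + 2)) / 2
            - \<gamma> * (real m * (real m + 1) * (2 * real m + 1) / 6)"
  using m
proof (induction m rule: dec_induct)
  case base
  have "(\<Sum>i<Suc k. LL i) = w" by (simp add: LL_def)
  moreover have "\<gamma> * (real (Suc k) * (real (Suc k) + 1) * (2 * real (Suc k) + 1) / 6) \<ge> 0"
    using g by simp
  ultimately show ?case by (simp add: algebra_simps)
next
  case (step m)
  have "LL m = a * (real m + 1) - \<gamma> * (real m + 1)^2" using step.hyps by (simp add: LL_def)
  moreover have "(w + a * (real (Suc m) * (real (Suc m) + 1) - (real k + 1) * (real k + 2)) / 2
            - \<gamma> * (real (Suc m) * (real (Suc m) + 1) * (2 * real (Suc m) + 1) / 6))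
     - (w + a * (real m * (real m + 1) - (real k + 1) * (real k + 2)) / 2
            - \<gamma> * (real m * (real m + 1) * (2 * real m + 1) / 6))
     = a * (real m + 1) - \<gamma> * (real m + 1)^2"
    by (simp add: field_simps power2_eq_square)
  moreover have "sum LL {..<Suc m} = sum LL {..<m} + LL m" by simp
  ultimately show ?case using step.IH by linarith
qed

lemma dd_lower:
  assumes k: "k \<ge> 1" and c: "c = w * real k" and w: "0 \<le> w" "w \<le> 1" and m: "m > k"
  shows "dd c k m \<ge> 2 * w / ((real k + 1) * (real k + 2)) * (real m + 1) - w^2 / (2 * (real k + 1)^2) * (real m + 1)^2"
  using m
proof (induction m rule: less_induct)
  case (less m)
  define a where "a = 2 * w / ((real k + 1) * (real k + 2))"
  define \<gamma> where "\<gamma> = w^2 / (2 * (real k + 1)^2)"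
  define \<beta> where "\<beta> = w / (real k + 1)"
  define LL where "LL = (\<lambda>i. if i < k then 0 else if i = k then w else a * (real i + 1) - \<gamma> * (real i + 1)^2)"
  have cb: "0 \<le> c" "c \<le> real k" using c w k by (auto simp: mult_le_cancel_right1)
  have g0: "\<gamma> \<ge> 0" by (simp add: \<gamma>_def)
  have bg: "\<beta>^2 = 2 * \<gamma>" by (simp add: \<beta>_def \<gamma>_def power_divide)
  have ak: "a * ((real k + 1) * (real k + 2)) = 2 * w" by (simp add: a_def)
  have "(\<Sum>i<m. LL i) \<le> (\<Sum>i<m. dd c k i)"
  proof (intro sum_mono)
    fix i assume i: "i \<in> {..<m}"
    show "LL i \<le> dd c k i"
    proof (cases "i < k")
      case True then show ?thesis by (simp add: LL_def dd_zero)
    next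
      case False
      show ?thesis
      proof (cases "i = k")
        case True then show ?thesis using k c by (simp add: LL_def dd_kk)
      next
        case False
        then have "i > k" using \<open>\<not> i < k\<close> by simp
        then show ?thesis using less.IH[of i] i \<open>\<not> i < k\<close> False by (simp add: LL_def a_def \<gamma>_def)
      qed
    qed
  qed
  then have S1: "(\<Sum>i<m. dd c k i) \<ge> w + a * (real m * (real m + 1) - (real k + 1) * (real k + 2)) / 2
            - \<gamma> * (real m * (real m + 1) * (2 * real m + 1) / 6)"
    using sum_ell[of k m \<gamma> w a] less.prems g0 unfolding LL_def by simp
  have "(\<Sum>i<m. dd c k i * dd c k (m - 1 - i)) \<le> (\<Sum>i<m. (\<beta> * (real i + 1)) * (\<beta> * (real m - real i)))"
  proof (intro sum_mono mult_mono)
    fix i assume i: "i \<in> {..<m}"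
    show "dd c k i \<le> \<beta> * (real i + 1)" using dd_upper[OF k c w] by (simp add: \<beta>_def)
    have "dd c k (m - 1 - i) \<le> \<beta> * (real (m - 1 - i) + 1)" using dd_upper[OF k c w] by (simp add: \<beta>_def)
    also have "real (m - 1 - i) + 1 = real m - real i" using i by (simp add: of_nat_diff)
    finally show "dd c k (m - 1 - i) \<le> \<beta> * (real m - real i)" .
    show "0 \<le> \<beta> * (real i + 1)" using w by (simp add: \<beta>_def)
    show "0 \<le> dd c k (m - 1 - i)" using dd_bounds[OF cb] by simp
  qed
  also have "\<dots> = \<beta>^2 * (\<Sum>i<m. (real i + 1) * (real m - real i))"
    by (simp add: sum_distrib_left power2_eq_square algebra_simps)
  also have "\<dots> = \<beta>^2 * (real m * (real m + 1) * (real m + 2) / 6)" by (simp add: sum_conv)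
  finally have S2: "(\<Sum>i<m. dd c k i * dd c k (m - 1 - i)) \<le> 2 * \<gamma> * (real m * (real m + 1) * (real m + 2) / 6)"
    using bg by simp
  have mk: "m \<noteq> k" "m \<ge> 1" using less.prems by auto
  have L1: "real m * dd c k m \<ge> 2 * (w + a * (real m * (real m + 1) - (real k + 1) * (real k + 2)) / 2
            - \<gamma> * (real m * (real m + 1) * (2 * real m + 1) / 6)) - 2 * \<gamma> * (real m * (real m + 1) * (real m + 2) / 6)"
    using dd_rec[OF mk(2), of c k] mk(1) S1 S2 by simp
  have L2: "2 * (w + a * (real m * (real m + 1) - (real k + 1) * (real k + 2)) / 2
            - \<gamma> * (real m * (real m + 1) * (2 * real m + 1) / 6)) - 2 * \<gamma> * (real m * (real m + 1) * (real m + 2) / 6)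
       = real m * (a * (real m + 1) - \<gamma> * (real m + 1)^2)"
    using ak by (simp add: field_simps power2_eq_square)
  have "real m * (a * (real m + 1) - \<gamma> * (real m + 1)^2) \<le> real m * dd c k m" using L1 L2 by linarith
  then show ?case using mk by (simp add: a_def \<gamma>_def mult_le_cancel_left_pos)
qed

lemma dd_lower2:
  assumes k: "k \<ge> 1" and c: "c = w * real k" and w: "0 \<le> w" "w \<le> 1" and m: "m > k"
    and wm: "w * (real m + 1) \<le> 1"
  shows "dd c k m \<ge> w * (real m + 1) / ((real k + 1) * (real k + 2))"
proof -
  have "w * (real m + 1) / ((real k + 1) * (real k + 2))
     \<le> 2 * w / ((real k + 1) * (real k + 2)) * (real m + 1) - w^2 / (2 * (real k + 1)^2) * (real m + 1)^2"
  proof -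
    have "w^2 / (2 * (real k + 1)^2) * (real m + 1)^2 = (w * (real m + 1)) * (w * (real m + 1)) / (2 * (real k + 1)^2)"
      by (simp add: power2_eq_square)
    also have "\<dots> \<le> (w * (real m + 1)) * 1 / (2 * (real k + 1)^2)"
      using wm w by (intro divide_right_mono mult_left_mono) auto
    also have "\<dots> \<le> w * (real m + 1) / ((real k + 1) * (real k + 2))"
    proof -
      have "(real k + 1) * (real k + 2) \<le> 2 * (real k + 1)^2" by (simp add: power2_eq_square algebra_simps)
      moreover have "0 < ((real k + 1) * (real k + 2)) * (2 * (real k + 1)^2)" by simp
      moreover have "0 \<le> w * (real m + 1)" using w by simp
      ultimately show ?thesis using divide_left_mono[of "(real k + 1) * (real k + 2)" "2 * (real k + 1)^2" "w * (real m + 1)"]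
        by (simp add: mult.commute)
    qed
    finally have Y: "w^2 / (2 * (real k + 1)^2) * (real m + 1)^2 \<le> w * (real m + 1) / ((real k + 1) * (real k + 2))" .
    have "2 * w / ((real k + 1) * (real k + 2)) * (real m + 1) = 2 * (w * (real m + 1) / ((real k + 1) * (real k + 2)))"
      by simp
    then show ?thesis using Y by linarith
  qed
  then show ?thesis using dd_lower[OF assms(1-5)] by linarith
qed


lemma hook_pos: "hook t \<ge> 1"
  by (induction t) auto

lemma wt_eq: "wt t = 1 / real (hook t)"
  by (simp add: wt_def nlab_def)

lemma bsize_0_iff: "bsize t = 0 \<longleftrightarrow> t = E"
  by (cases t) auto

lemma hook_lower: "2 ^ bsize t \<le> 2 * hook t ^ 2"
proof (induction t)
  case E then show ?case by simp
next
  case (N l r)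
  let ?k = "Suc (bsize l + bsize r)"
  show ?case
  proof (cases "?k = 1")
    case True
    then have "l = E" "r = E" using bsize_0_iff by auto
    then show ?thesis by simp
  next
    case False
    then have k2: "?k \<ge> 2" by linarith
    have "(2::nat) ^ ?k = 2 * (2 ^ bsize l * 2 ^ bsize r)" by (simp add: power_add)
    also have "\<dots> \<le> 2 * ((2 * hook l ^ 2) * (2 * hook r ^ 2))"
      using N.IH by (intro mult_le_mono2 mult_le_mono) auto
    also have "\<dots> = 2 * 4 * (hook l * hook r)^2" by (simp add: power_mult_distrib)
    also have "\<dots> \<le> 2 * ?k^2 * (hook l * hook r)^2"
    proof -
      have "4 \<le> ?k^2" using k2 power_mono[of 2 ?k 2] by simp
      then show ?thesis by simp
    qed
    also have "\<dots> = 2 * hook (N l r) ^ 2"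
    proof -
      have h: "hook (N l r) = ?k * (hook l * hook r)" by (simp add: algebra_simps)
      show ?thesis by (simp only: h power_mult_distrib mult.assoc)
    qed
    finally show ?thesis by simp
  qed
qed

lemma finite_bsize_le: "finite {t. bsize t \<le> n}"
proof (induction n)
  case 0
  have "{t. bsize t \<le> 0} = {E}" using bsize_0_iff by auto
  then show ?case by simp
next
  case (Suc n)
  have "{t. bsize t \<le> Suc n} \<subseteq> insert E ((\<lambda>(l,r). N l r) ` ({t. bsize t \<le> n} \<times> {t. bsize t \<le> n}))"
  proof
    fix t assume "t \<in> {t. bsize t \<le> Suc n}"
    then show "t \<in> insert E ((\<lambda>(l,r). N l r) ` ({t. bsize t \<le> n} \<times> {t. bsize t \<le> n}))"
      by (cases t) auto
  qed
  moreover have "finite (insert E ((\<lambda>(l,r). N l r) ` ({t. bsize t \<le> n} \<times> {t. bsize t \<le> n})))"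
    using Suc by simp
  ultimately show ?case by (rule finite_subset)
qed

lemma finite_bsize_eq: "finite {t. bsize t = n}"
  by (rule finite_subset[OF _ finite_bsize_le[of n]]) auto

lemma sum_by_size:
  assumes "finite I"
  shows "(\<Sum>t\<in>{t. bsize t \<in> I}. f t) = (\<Sum>k\<in>I. \<Sum>t\<in>{t. bsize t = k}. f t)"
proof -
  have "{t. bsize t \<in> I} = (\<Union>k\<in>I. {t. bsize t = k})" by auto
  then show ?thesis
    by (simp only:) (rule sum.UNION_disjoint[OF assms], auto simp: finite_bsize_eq)
qed

lemma W_one: "(\<Sum>t\<in>{t. bsize t = k}. 1 / real (hook t)) = 1"
proof (induction k rule: less_induct)
  case (less k)
  show ?case
  proof (cases k)
    case 0
    have "{t. bsize t = 0} = {E}" using bsize_0_iff by auto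
    then show ?thesis using 0 by simp
  next
    case (Suc j)
    define P where "P = Sigma {l. bsize l \<le> j} (\<lambda>l. {r. bsize r = j - bsize l})"
    have img: "{t. bsize t = k} = (\<lambda>(l,r). N l r) ` P"
    proof
      show "{t. bsize t = k} \<subseteq> (\<lambda>(l,r). N l r) ` P"
      proof
        fix t assume "t \<in> {t. bsize t = k}"
        then show "t \<in> (\<lambda>(l,r). N l r) ` P" using Suc
          by (cases t) (auto simp: P_def image_iff)
      qed
      show "(\<lambda>(l,r). N l r) ` P \<subseteq> {t. bsize t = k}" using Suc by (auto simp: P_def)
    qed
    have inj: "inj_on (\<lambda>(l,r). N l r) P" by (auto simp: inj_on_def)
    have fP: "finite {l. bsize l \<le> j}" by (rule finite_bsize_le)
    have "(\<Sum>t\<in>{t. bsize t = k}. 1 / real (hook t)) = (\<Sum>(l,r)\<in>P. 1 / real (hook (N l r)))"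
      unfolding img by (subst sum.reindex[OF inj]) (simp add: case_prod_unfold)
    also have "\<dots> = (\<Sum>(l,r)\<in>P. 1 / real k * (1 / real (hook l)) * (1 / real (hook r)))"
    proof (intro sum.cong refl, clarify)
      fix l r assume "(l, r) \<in> P"
      then have "bsize l + bsize r = j" by (auto simp: P_def)
      then have "hook (N l r) = k * hook l * hook r" using Suc by simp
      then have "real (hook (N l r)) = real (k * hook l * hook r)" by (rule arg_cong)
      then have "real (hook (N l r)) = real k * real (hook l) * real (hook r)" by (simp only: of_nat_mult)
      then show "1 / real (hook (N l r)) = 1 / real k * (1 / real (hook l)) * (1 / real (hook r))" by simp
    qed
    also have "\<dots> = (\<Sum>l\<in>{l. bsize l \<le> j}. \<Sum>r\<in>{r. bsize r = j - bsize l}. 1 / real k * (1 / real (hook l)) * (1 / real (hook r)))"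
      unfolding P_def by (rule sum.Sigma[symmetric]) (auto simp: fP finite_bsize_eq)
    also have "\<dots> = (\<Sum>l\<in>{l. bsize l \<le> j}. 1 / real k * (1 / real (hook l)))"
    proof (intro sum.cong refl)
      fix l assume "l \<in> {l. bsize l \<le> j}"
      have "(\<Sum>r\<in>{r. bsize r = j - bsize l}. 1 / real k * (1 / real (hook l)) * (1 / real (hook r)))
           = 1 / real k * (1 / real (hook l)) * (\<Sum>r\<in>{r. bsize r = j - bsize l}. 1 / real (hook r))"
        by (simp add: sum_distrib_left)
      also have "\<dots> = 1 / real k * (1 / real (hook l))" using less.IH[of "j - bsize l"] Suc by simp
      finally show "(\<Sum>r\<in>{r. bsize r = j - bsize l}. 1 / real k * (1 / real (hook l)) * (1 / real (hook r)))
           = 1 / real k * (1 / real (hook l))" .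
    qed
    also have "\<dots> = 1 / real k * (\<Sum>l\<in>{l. bsize l \<in> {..j}}. 1 / real (hook l))"
      by (simp add: sum_distrib_left)
    also have "\<dots> = 1 / real k * (\<Sum>i\<in>{..j}. \<Sum>l\<in>{l. bsize l = i}. 1 / real (hook l))"
      using sum_by_size[of "{..j}" "\<lambda>l. 1 / real (hook l)"] by (simp only: finite_atMost)
    also have "\<dots> = 1 / real k * (\<Sum>i\<in>{..j}. 1)"
      using less.IH Suc by simp
    also have "\<dots> = 1" using Suc by simp
    finally show ?thesis .
  qed
qed

lemma telescope: "K \<le> n \<Longrightarrow> (\<Sum>k\<in>{K..<n}. 1 / ((real k + 1) * (real k + 2))) = 1 / (real K + 1) - 1 / (real n + 1)"
proof (induction n rule: dec_induct)
  case base then show ?case by simp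
next
  case (step m)
  have n1: "real m + 1 \<noteq> 0" "real m + 2 \<noteq> 0" by linarith+
  have a: "1 / (real m + 1) = (real m + 2) / ((real m + 1) * (real m + 2))" using n1 by simp
  have "1 / (real m + 1) - 1 / ((real m + 1) * (real m + 2)) = ((real m + 2) - 1) / ((real m + 1) * (real m + 2))"
    by (subst a) (simp only: diff_divide_distrib)
  also have "(real m + 2) - 1 = real m + 1" by simp
  also have "(real m + 1) / ((real m + 1) * (real m + 2)) = 1 / (real m + 2)" using n1 by simp
  finally have e: "1 / (real m + 1) - 1 / ((real m + 1) * (real m + 2)) = 1 / (real m + 2)" .
  have s: "(\<Sum>k\<in>{K..<Suc m}. 1 / ((real k + 1) * (real k + 2))) = (\<Sum>k\<in>{K..<m}. 1 / ((real k + 1) * (real k + 2))) + 1 / ((real m + 1) * (real m + 2))"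
    using step.hyps(1) by simp
  have r: "real (Suc m) + 1 = real m + 2" by simp
  show ?case unfolding s r using step.IH e by linarith
qed


lemma log4_le: "real n \<ge> 1 \<Longrightarrow> log 4 (real n) \<le> log 2 (real n + 1)"
proof -
  assume n: "real n \<ge> 1"
  have l0: "0 \<le> ln (real n)" using n by simp
  have l2: "0 < ln (2::real)" by simp
  have l24: "ln (2::real) \<le> ln 4" by simp
  have "log 4 (real n) = ln (real n) / ln 4" by (simp add: log_def)
  also have "\<dots> \<le> ln (real n) / ln 2" using l0 l2 l24 by (intro divide_left_mono) auto
  also have "\<dots> \<le> ln (real n + 1) / ln 2" using n l2 by (intro divide_right_mono) auto
  also have "\<dots> = log 2 (real n + 1)" by (simp add: log_def)
  finally show ?thesis .
qed

lemma term_eq: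
  assumes "n \<ge> 1"
  shows "1 - fps_nth (Sgf t) n / fps_nth Tgf n = dd (wt t * real (bsize t)) (bsize t) n"
  using assms by (simp add: Tgf_nth Sgf_nth dd_def)

lemma wt_bounds: "0 < wt t" "wt t \<le> 1"
  using hook_pos[of t] by (auto simp: wt_eq)

lemma c_bounds: "0 \<le> wt t * real (bsize t)" "wt t * real (bsize t) \<le> real (bsize t)"
  using wt_bounds[of t] by (auto intro: mult_left_le_one_le)

lemma main_bound:
  fixes n :: nat
  assumes n2: "n \<ge> 2" and Kn: "2 * log 2 (real n + 1) + 2 \<le> real n"
  shows "(real n + 1) / (2 * log 2 (real n + 1) + 3) - 1 \<le>
    (\<Sum>t\<in>{t. bsize t \<le> n \<and> real (bsize t) \<ge> log 4 (real n)}. 1 - fps_nth (Sgf t) n / fps_nth Tgf n)"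
proof -
  define x where "x = 2 * log 2 (real n + 1) + 1"
  define K where "K = nat \<lceil>x\<rceil>"
  have lg: "log 2 (real n + 1) \<ge> 0" by simp
  have x1: "x \<ge> 1" using lg by (simp add: x_def)
  have Kx: "real K \<ge> x" "real K \<le> x + 1" using x1 of_int_ceiling_le_add_one[of x] by (auto simp: K_def)
  have K1: "K \<ge> 1" using Kx x1 by linarith
  have Kn': "K \<le> n" using Kx Kn by (simp add: x_def)
  define S where "S = {t. bsize t \<le> n \<and> real (bsize t) \<ge> log 4 (real n)}"
  define A where "A = {t. bsize t \<in> {K..<n}}"
  define f where "f = (\<lambda>t. 1 - fps_nth (Sgf t) n / fps_nth Tgf n)"
  have fS: "finite S" by (rule finite_subset[OF _ finite_bsize_le[of n]]) (auto simp: S_def)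
  have AS: "A \<subseteq> S"
  proof
    fix t assume "t \<in> A"
    then have t: "K \<le> bsize t" "bsize t < n" by (auto simp: A_def)
    have "log 4 (real n) \<le> log 2 (real n + 1)" using n2 by (intro log4_le) simp
    also have "\<dots> \<le> x" using lg by (simp add: x_def)
    also have "\<dots> \<le> real (bsize t)" using Kx t by linarith
    finally show "t \<in> S" using t by (simp add: S_def)
  qed
  have f_eq: "f t = dd (wt t * real (bsize t)) (bsize t) n" for t
    using n2 by (simp add: f_def term_eq)
  have f_nn: "0 \<le> f t" for t
    using dd_bounds[OF c_bounds] by (simp add: f_eq)
  have "(\<Sum>t\<in>A. f t) \<le> (\<Sum>t\<in>S. f t)"
    using fS AS f_nn by (intro sum_mono2) auto
  moreover have "(\<Sum>t\<in>A. f t) = (\<Sum>k\<in>{K..<n}. \<Sum>t\<in>{t. bsize t = k}. f t)"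
    unfolding A_def by (rule sum_by_size) simp
  moreover have "(\<Sum>t\<in>{t. bsize t = k}. f t) \<ge> (real n + 1) / ((real k + 1) * (real k + 2))"
    if k: "k \<in> {K..<n}" for k
  proof -
    have "(\<Sum>t\<in>{t. bsize t = k}. f t) \<ge> (\<Sum>t\<in>{t. bsize t = k}. (real n + 1) / ((real k + 1) * (real k + 2)) * (1 / real (hook t)))"
    proof (intro sum_mono)
      fix t assume "t \<in> {t. bsize t = k}"
      then have tk: "bsize t = k" by simp
      define w where "w = wt t"
      have w: "0 \<le> w" "w \<le> 1" using wt_bounds[of t] by (auto simp: w_def)
      have hp: "real (hook t) > 0" using hook_pos[of t] by simp
      have "2 * (real n + 1)^2 = 2 powr x"
      proof -
        have "2 powr x = 2 powr (2 * log 2 (real n + 1)) * 2" by (simp add: x_def powr_add)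
        also have "2 powr (2 * log 2 (real n + 1)) = 2 powr (log 2 (real n + 1)) * 2 powr (log 2 (real n + 1))"
          by (simp only: mult_2 powr_add)
        also have "\<dots> = (real n + 1)^2" by (simp add: power2_eq_square)
        finally show ?thesis by simp
      qed
      also have "\<dots> \<le> 2 powr (real k)" using Kx k by (intro powr_mono) auto
      also have "\<dots> = 2 ^ k" by (simp add: powr_realpow)
      also have "\<dots> = real (2 ^ bsize t)" by (simp add: tk)
      also have "\<dots> \<le> real (2 * hook t ^ 2)" using hook_lower[of t] by (simp only: of_nat_le_iff)
      also have "\<dots> = 2 * real (hook t) ^ 2" by simp
      finally have "(real n + 1)^2 \<le> real (hook t) ^ 2" by simp
      then have hn: "real n + 1 \<le> real (hook t)"
        using power2_le_imp_le hp by (metis less_imp_le)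
      have "w * (real n + 1) = (real n + 1) / real (hook t)" by (simp add: w_def wt_eq)
      also have "\<dots> \<le> 1" using hn hp by simp
      finally have wn: "w * (real n + 1) \<le> 1" .
      have k1: "k \<ge> 1" using K1 k by simp
      have nk: "n > k" using k by simp
      have fe: "f t = dd (w * real k) k n" by (simp add: f_eq w_def tk)
      have "w * (real n + 1) / ((real k + 1) * (real k + 2)) \<le> dd (w * real k) k n"
        by (rule dd_lower2[OF k1 refl w(1) w(2) nk wn])
      moreover have "w * (real n + 1) / ((real k + 1) * (real k + 2)) = (real n + 1) / ((real k + 1) * (real k + 2)) * (1 / real (hook t))"
        by (simp add: w_def wt_eq)
      ultimately show "(real n + 1) / ((real k + 1) * (real k + 2)) * (1 / real (hook t)) \<le> f t"
        using fe by simp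
    qed
    also have "(\<Sum>t\<in>{t. bsize t = k}. (real n + 1) / ((real k + 1) * (real k + 2)) * (1 / real (hook t)))
        = (real n + 1) / ((real k + 1) * (real k + 2))"
      by (simp only: sum_distrib_left[symmetric] W_one mult_1_right)
    finally show ?thesis .
  qed
  then have "(\<Sum>k\<in>{K..<n}. \<Sum>t\<in>{t. bsize t = k}. f t) \<ge> (\<Sum>k\<in>{K..<n}. (real n + 1) * (1 / ((real k + 1) * (real k + 2))))"
    by (intro sum_mono) simp
  moreover have "(\<Sum>k\<in>{K..<n}. (real n + 1) * (1 / ((real k + 1) * (real k + 2)))) = (real n + 1) / (real K + 1) - 1"
  proof -
    have "(\<Sum>k\<in>{K..<n}. (real n + 1) * (1 / ((real k + 1) * (real k + 2)))) = (real n + 1) * (\<Sum>k\<in>{K..<n}. 1 / ((real k + 1) * (real k + 2)))"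
      by (simp only: sum_distrib_left)
    also have "\<dots> = (real n + 1) * (1 / (real K + 1) - 1 / (real n + 1))" by (simp only: telescope[OF Kn'])
    also have "\<dots> = (real n + 1) / (real K + 1) - 1" by (simp add: right_diff_distrib)
    finally show ?thesis .
  qed
  moreover have "(real n + 1) / (2 * log 2 (real n + 1) + 3) \<le> (real n + 1) / (real K + 1)"
    using Kx x1 by (intro divide_left_mono) (auto simp: x_def)
  ultimately show ?thesis unfolding S_def f_def by linarith
qed

theorem proposition3p11:
  shows "(\<lambda>n::nat. \<Sum>t\<in>{t. bsize t \<le> n \<and> real (bsize t) \<ge> log 4 (real n)}.
            1 - fps_nth (Sgf t) n / fps_nth Tgf n) \<in> \<Omega>(\<lambda>n. sqrt (real n))"
proof -
  define F where "F = (\<lambda>n::nat. \<Sum>t\<in>{t. bsize t \<le> n \<and> real (bsize t) \<ge> log 4 (real n)}.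
            1 - fps_nth (Sgf t) n / fps_nth Tgf n)"
  have e1: "eventually (\<lambda>n::nat. (real n + 1) / (2 * log 2 (real n + 1) + 3) - 1 \<ge> sqrt (real n)) at_top"
    by real_asymp
  have e2: "eventually (\<lambda>n::nat. 2 * log 2 (real n + 1) + 2 \<le> real n) at_top"
    by real_asymp
  have e3: "eventually (\<lambda>n::nat. n \<ge> 2) at_top" by (rule eventually_ge_at_top)
  have "eventually (\<lambda>n. norm (F n) \<ge> 1 * norm (sqrt (real n))) at_top"
    using e1 e2 e3
  proof eventually_elim
    case (elim n)
    have "sqrt (real n) \<le> F n" using main_bound[OF elim(3) elim(2)] elim(1) unfolding F_def by linarith
    then show ?case by simp
  qed
  then have "F \<in> \<Omega>(\<lambda>n. sqrt (real n))" by (intro landau_omega.bigI[of 1]) auto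
  then show ?thesis unfolding F_def .
qed

end
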